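(* Let $\Theta$ be a non-empty finite set, let $\mathcal{S}$ be a measurable subset of $\Delta(\Theta)$, and fix an interview cost $c>0$. For two populations $\pi,\pi'\in\Delta(\mathcal{S})$ with $p_\pi=p_{\pi'}$, $\pi' \mathrel{M} \pi$ holds if and only if either (i) there is systematic ex-ante discrimination against $\pi$, or (ii) there is no ex-ante discrimination.
   Context: $\Delta(\Theta)$ denotes the set of probability distributions on $\Theta$ (with its Borel $\sigma$-algebra). A population is a probability measure $\pi\in\Delta(\mathcal{S})$; its skill distribution is $p_\pi(\theta)=\int_{\mathcal{S}} s(\theta)\,\pi(\mathrm{d}s)$ for $\theta\in\Theta$. For a non-empty finite $A\subset\mathbb{R}^\Theta$, $v_A(s)=\max_{a\in A}\sum_{\theta\in\Theta}a(\theta)s(\theta)$. A firm is a pair $(A,\alpha)$ with $A$ a non-empty finite subset of $\mathbb{R}^\Theta$ and $0<\alpha\le 1$. Firm $(A,\alpha)$ excludes population $\pi$ if $\alpha\int_{\mathcal{S}}\max\{v_A,0\}\,\mathrm{d}\pi\le c$. For $\pi,\pi'$ with $p_\pi=p_{\pi'}$: there is systematic ex-ante discrimination against $\pi$ if every firm that excludes $\pi'$ also excludes $\pi$, and some firm excludes $\pi$ but not $\pi'$. There is unsystematic ex-ante discrimination if there is a firm that excludes $\pi$ but not $\pi'$ and a firm that excludes $\pi'$ but not $\pi$. There is no ex-ante discrimination if there is neither systematic ex-ante discrimination (against $\pi$ or against $\pi'$) nor unsystematic ex-ante discrimination. $\pi' \mathrel{M} \pi$ means $\int_{\mathcal{S}}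 h\,\mathrm{d}\pi'\ge\int_{\mathcal{S}} h\,\mathrm{d}\pi$ for every convex continuous $h:\Delta(\Theta)\to\mathbb{R}$. *)

theory Defs
  imports "HOL-Analysis.Analysis" "HOL-Probability.Probability"
begin

text \<open>Theta is modelled by a finite type 'n; a skill profile s in Delta(Theta)
  is a vector s :: real^'n with nonnegative entries summing to 1.\<close>

definition prob_simplex :: "(real^'n::finite) set" where
  "prob_simplex = {s. (\<forall>\<theta>. 0 \<le> s $ \<theta>) \<and> (\<Sum>\<theta>\<in>UNIV. s $ \<theta>) = 1}"

definition population :: "(real^'n::finite) set \<Rightarrow> (real^'n) measure \<Rightarrow> bool" where
  "population S \<pi> \<longleftrightarrow> prob_space \<pi> \<and> sets \<pi> = sets (restrict_space borel S)"

definition skill_dist :: "(real^'n::finite) measure \<Rightarrow> 'n \<Rightarrow> real" where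
  "skill_dist \<pi> \<theta> = (\<integral>s. s $ \<theta> \<partial>\<pi>)"

definition vA :: "(real^'n::finite) set \<Rightarrow> real^'n \<Rightarrow> real" where
  "vA A s = Max ((\<lambda>a. \<Sum>\<theta>\<in>UNIV. a $ \<theta> * s $ \<theta>) ` A)"

definition firm :: "(real^'n::finite) set \<Rightarrow> real \<Rightarrow> bool" where
  "firm A \<alpha> \<longleftrightarrow> finite A \<and> A \<noteq> {} \<and> 0 < \<alpha> \<and> \<alpha> \<le> 1"

definition excludes :: "real \<Rightarrow> (real^'n::finite) set \<Rightarrow> real \<Rightarrow> (real^'n) measure \<Rightarrow> bool" where
  "excludes c A \<alpha> \<pi> \<longleftrightarrow> \<alpha> * (\<integral>s. max (vA A s) 0 \<partial>\<pi>) \<le> c"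

definition systematic_disc :: "real \<Rightarrow> (real^'n::finite) measure \<Rightarrow> (real^'n) measure \<Rightarrow> bool" where
  "systematic_disc c \<pi> \<pi>' \<longleftrightarrow>
     (\<forall>A \<alpha>. firm A \<alpha> \<longrightarrow> excludes c A \<alpha> \<pi>' \<longrightarrow> excludes c A \<alpha> \<pi>) \<and>
     (\<exists>A \<alpha>. firm A \<alpha> \<and> excludes c A \<alpha> \<pi> \<and> \<not> excludes c A \<alpha> \<pi>')"

definition unsystematic_disc :: "real \<Rightarrow> (real^'n::finite) measure \<Rightarrow> (real^'n) measure \<Rightarrow> bool" where
  "unsystematic_disc c \<pi> \<pi>' \<longleftrightarrow>
     (\<exists>A \<alpha>. firm A \<alpha> \<and> excludes c A \<alpha> \<pi> \<and> \<not> excludes c A \<alpha> \<pi>') \<and>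
     (\<exists>A \<alpha>. firm A \<alpha> \<and> excludes c A \<alpha> \<pi>' \<and> \<not> excludes c A \<alpha> \<pi>)"

definition no_disc :: "real \<Rightarrow> (real^'n::finite) measure \<Rightarrow> (real^'n) measure \<Rightarrow> bool" where
  "no_disc c \<pi> \<pi>' \<longleftrightarrow>
     \<not> systematic_disc c \<pi> \<pi>' \<and> \<not> systematic_disc c \<pi>' \<pi> \<and> \<not> unsystematic_disc c \<pi> \<pi>'"

definition M_order :: "(real^'n::finite) measure \<Rightarrow> (real^'n) measure \<Rightarrow> bool" where
  "M_order \<pi>' \<pi> \<longleftrightarrow>
     (\<forall>h. convex_on prob_simplex h \<and> continuous_on prob_simplex h \<longrightarrow>
          (\<integral>s. h s \<partial>\<pi>') \<ge> (\<integral>s. h s \<partial>\<pi>))"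

end

theory Submission
  imports Defs
begin


lemma vA_inner: "vA A s = Max ((\<lambda>a. inner a s) ` A)"
  unfolding vA_def inner_vec_def by simp

lemma vA_ge: "finite A \<Longrightarrow> a \<in> A \<Longrightarrow> inner a s \<le> vA A s"
  unfolding vA_inner by (rule Max_ge) auto

lemma vA_attained: "finite A \<Longrightarrow> A \<noteq> {} \<Longrightarrow> \<exists>a\<in>A. vA A s = inner a s"
proof -
  assume "finite A" "A \<noteq> {}"
  then have "Max ((\<lambda>a. inner a s) ` A) \<in> (\<lambda>a. inner a s) ` A" by (intro Max_in) auto
  then show ?thesis unfolding vA_inner by auto
qed

lemma vA_convex:
  assumes "finite A" "A \<noteq> {}"
  shows "convex_on UNIV (vA A)"
proof (rule convex_onI)
  fix t x y assume t: "(0::real) < t" "t < 1"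
  obtain a where a: "a \<in> A" "vA A ((1 - t) *\<^sub>R x + t *\<^sub>R y) = inner a ((1 - t) *\<^sub>R x + t *\<^sub>R y)"
    using vA_attained[OF assms] by blast
  have "inner a ((1 - t) *\<^sub>R x + t *\<^sub>R y) = (1 - t) * inner a x + t * inner a y"
    by (simp add: inner_add_right)
  also have "\<dots> \<le> (1 - t) * vA A x + t * vA A y"
    using t vA_ge[OF assms(1) a(1)] by (intro add_mono mult_left_mono) auto
  finally show "vA A ((1 - t) *\<^sub>R x + t *\<^sub>R y) \<le> (1 - t) * vA A x + t * vA A y" using a by simp
qed simp

lemma convex_on_max0:
  assumes "convex_on UNIV (f :: 'a::real_vector \<Rightarrow> real)"
  shows "convex_on UNIV (\<lambda>x. max (f x) 0)"
proof (rule convex_onI)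
  fix t x y assume t: "(0::real) < t" "t < 1"
  have "f ((1 - t) *\<^sub>R x + t *\<^sub>R y) \<le> (1 - t) * f x + t * f y"
    using t by (intro convex_onD[OF assms]) auto
  also have "\<dots> \<le> (1 - t) * max (f x) 0 + t * max (f y) 0"
    using t by (intro add_mono mult_left_mono) auto
  finally show "max (f ((1 - t) *\<^sub>R x + t *\<^sub>R y)) 0 \<le> (1 - t) * max (f x) 0 + t * max (f y) 0"
    using t by (simp add: max_def)
qed simp

lemma compact_simplex: "compact (prob_simplex :: (real^'n::finite) set)"
proof -
  have eq: "(prob_simplex :: (real^'n) set) = (\<Inter>i. {s. 0 \<le> s $ i}) \<inter> {s. (\<Sum>\<theta>\<in>UNIV. s $ \<theta>) = 1}"
    unfolding prob_simplex_def by auto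
  have cl: "closed (prob_simplex :: (real^'n) set)"
    unfolding eq by (intro closed_Int closed_INT ballI closed_Collect_le closed_Collect_eq continuous_intros) 
  have "bounded (prob_simplex :: (real^'n) set)"
  proof -
    have "prob_simplex \<subseteq> cbox (0::real^'n) 1"
    proof
      fix s :: "real^'n" assume s: "s \<in> prob_simplex"
      have "s $ i \<le> 1" for i
      proof -
        have "s $ i \<le> (\<Sum>\<theta>\<in>UNIV. s $ \<theta>)" using s unfolding prob_simplex_def
          by (intro member_le_sum) auto
        then show ?thesis using s unfolding prob_simplex_def by simp
      qed
      then show "s \<in> cbox 0 1" using s unfolding prob_simplex_def by (auto simp: mem_box_cart)
    qed
    then show ?thesis using bounded_cbox bounded_subset by blast
  qed
  then show ?thesis using cl compact_eq_bounded_closed by blast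
qed

lemma simplex_nonempty: "prob_simplex \<noteq> ({} :: (real^'n::finite) set)"
proof -
  have "(\<chi> i. 1 / real CARD('n)) \<in> (prob_simplex :: (real^'n) set)"
    unfolding prob_simplex_def by simp
  then show ?thesis by blast
qed



lemma support_lin:
  fixes h :: "real^'n::finite \<Rightarrow> real"
  assumes cv: "convex_on prob_simplex h" and ct: "continuous_on prob_simplex h"
    and s0: "s0 \<in> prob_simplex" and e: "e > 0"
  shows "\<exists>a. (\<forall>s\<in>prob_simplex. inner a s \<le> h s) \<and> h s0 - e < inner a s0"
proof -
  define E where "E = epigraph prob_simplex h"
  have cE: "convex E" unfolding E_def using cv by (simp add: convex_epigraph)
  have "E = (prob_simplex \<times> UNIV) \<inter> (\<lambda>xy. h (fst xy) - snd xy) -` {..0}"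
    unfolding E_def epigraph_def by auto
  moreover have "closed ((prob_simplex \<times> UNIV) \<inter> (\<lambda>xy. h (fst xy) - snd xy) -` {..0})"
  proof (rule continuous_closed_preimage)
    show "continuous_on (prob_simplex \<times> UNIV) (\<lambda>xy. h (fst xy) - snd xy)"
      by (intro continuous_intros continuous_on_compose2[OF ct]) auto
    show "closed (prob_simplex \<times> (UNIV::real set))"
      using compact_imp_closed[OF compact_simplex] by (intro closed_Times) auto
  qed auto
  ultimately have clE: "closed E" by simp
  have "(s0, h s0 - e) \<notin> E" using e unfolding E_def epigraph_def by auto
  then obtain p d where pd: "inner p (s0, h s0 - e) < d" "\<forall>x\<in>E. d < inner p x"
    using separating_hyperplane_closed_point[OF cE clE] by blast
  obtain a1 b1 where p: "p = (a1, b1)" by (cases p)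
  have ineq: "d < inner a1 s + b1 * h s" if "s \<in> prob_simplex" for s :: "real^'n"
    using pd(2)[rule_format, of "(s, h s)"] that unfolding E_def epigraph_def p by (simp add: inner_Pair)
  have z: "inner a1 s0 + b1 * (h s0 - e) < d" using pd(1) unfolding p by (simp add: inner_Pair)
  have "b1 > 0"
  proof -
    have "d < inner a1 s0 + b1 * h s0" using ineq s0 by blast
    with z e show ?thesis by (smt (verit) mult_le_0_iff right_diff_distrib)
  qed
  define a :: "real^'n" where "a = (\<chi> i. d / b1 - a1 $ i / b1)"
  have lin: "inner a s = (d - inner a1 s) / b1" if "s \<in> prob_simplex" for s :: "real^'n"
  proof -
    have "inner a s = (\<Sum>i\<in>UNIV. (d / b1) * s $ i - (a1 $ i * s $ i) / b1)"
      unfolding a_def inner_vec_def by (simp add: algebra_simps)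
    also have "\<dots> = (d / b1) * (\<Sum>i\<in>UNIV. s $ i) - (\<Sum>i\<in>UNIV. a1 $ i * s $ i) / b1"
      by (simp add: sum_subtractf sum_distrib_left sum_divide_distrib)
    also have "\<dots> = (d - inner a1 s) / b1"
      using that unfolding prob_simplex_def inner_vec_def by (simp add: diff_divide_distrib)
    finally show ?thesis .
  qed
  have "\<forall>s\<in>(prob_simplex::(real^'n) set). inner a s \<le> h s"
  proof
    fix s :: "real^'n" assume s: "s \<in> prob_simplex"
    have "d - inner a1 s < b1 * h s" using ineq[OF s] by simp
    then show "inner a s \<le> h s" using lin[OF s] \<open>b1 > 0\<close> by (simp add: divide_simps) (smt (verit) mult.commute mult_le_cancel_left_pos)
  qed
  moreover have "h s0 - e < inner a s0"
  proof -
    have "b1 * (h s0 - e) < d - inner a1 s0" using z by simp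
    then show ?thesis using lin[OF s0] \<open>b1 > 0\<close> by (simp add: divide_simps mult.commute) (smt (verit) mult_less_cancel_left_pos)
  qed
  ultimately show ?thesis by blast
qed



lemma approx_vA:
  fixes h :: "real^'n::finite \<Rightarrow> real"
  assumes cv: "convex_on prob_simplex h" and ct: "continuous_on prob_simplex h" and e: "e > 0"
  shows "\<exists>A. finite A \<and> A \<noteq> {} \<and> (\<forall>s\<in>prob_simplex. vA A s \<le> h s \<and> h s - e < vA A s)"
proof -
  have "\<forall>s0\<in>prob_simplex. \<exists>a. (\<forall>s\<in>prob_simplex. inner a s \<le> h s) \<and> h s0 - e < inner a s0"
    using support_lin[OF cv ct _ e] by blast
  then obtain af where af: "\<And>s0. s0 \<in> prob_simplex \<Longrightarrow> (\<forall>s\<in>prob_simplex. inner (af s0) s \<le> h s) \<and> h s0 - e < inner (af s0) s0"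
    by (metis (no_types, lifting) bchoice)
  have "\<exists>T. open T \<and> prob_simplex \<inter> (\<lambda>s. inner (af s0) s - h s) -` {-e<..} = prob_simplex \<inter> T" for s0
  proof -
    have "continuous_on prob_simplex (\<lambda>s. inner (af s0) s - h s)"
      by (intro continuous_on_diff continuous_on_inner continuous_on_const continuous_on_id ct)
    then have "openin (top_of_set prob_simplex) (prob_simplex \<inter> (\<lambda>s. inner (af s0) s - h s) -` {-e<..})"
      by (rule continuous_openin_preimage_gen) simp
    then show ?thesis unfolding openin_open by blast
  qed
  then obtain Tf where Tf: "\<And>s0. open (Tf s0)"
    "\<And>s0. prob_simplex \<inter> (\<lambda>s. inner (af s0) s - h s) -` {-e<..} = prob_simplex \<inter> Tf s0"
    by (metis (no_types))
  have cov: "prob_simplex \<subseteq> (\<Union>c\<in>prob_simplex. Tf c)"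
  proof
    fix s :: "real^'n" assume s: "s \<in> prob_simplex"
    then have "s \<in> prob_simplex \<inter> (\<lambda>s'. inner (af s) s' - h s') -` {-e<..}" using af[OF s] by auto
    then have "s \<in> Tf s" using Tf(2)[of s] by blast
    then show "s \<in> (\<Union>c\<in>prob_simplex. Tf c)" using s by blast
  qed
  obtain C where C: "C \<subseteq> prob_simplex" "finite C" "prob_simplex \<subseteq> (\<Union>c\<in>C. Tf c)"
    using compactE_image[OF compact_simplex Tf(1) cov] by metis
  define A where "A = af ` C"
  have "C \<noteq> {}" using C(3) simplex_nonempty by auto
  then have A: "finite A" "A \<noteq> {}" unfolding A_def using C(2) by auto
  have "vA A s \<le> h s \<and> h s - e < vA A s" if s: "s \<in> prob_simplex" for s
  proof
    obtain a where a: "a \<in> A" "vA A s = inner a s" using vA_attained[OF A] by blast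
    then show "vA A s \<le> h s" using af C(1) s unfolding A_def by auto
    obtain c where c: "c \<in> C" "s \<in> Tf c" using C(3) s by blast
    then have "s \<in> prob_simplex \<inter> (\<lambda>s. inner (af c) s - h s) -` {-e<..}" using Tf(2)[of c] s by blast
    then have "h s - e < inner (af c) s" by auto
    also have "\<dots> \<le> vA A s" using c(1) by (intro vA_ge A(1)) (auto simp: A_def)
    finally show "h s - e < vA A s" .
  qed
  then show ?thesis using A by blast
qed



lemma pop_space: "population S \<pi> \<Longrightarrow> space \<pi> = S"
proof -
  assume "population S \<pi>"
  then have "sets \<pi> = sets (restrict_space borel S)" unfolding population_def by blast
  from sets_eq_imp_space_eq[OF this] show "space \<pi> = S" by (simp add: space_restrict_space)
qed

lemma pop_integrable:
  fixes f :: "real^'n::finite \<Rightarrow> real"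
  assumes pop: "population S \<pi>" and sub: "S \<subseteq> prob_simplex" and ct: "continuous_on prob_simplex f"
  shows "integrable \<pi> f"
proof -
  interpret prob_space \<pi> using pop unfolding population_def by blast
  have "f \<in> borel_measurable (restrict_space borel S)"
    by (rule borel_measurable_continuous_on_restrict) (rule continuous_on_subset[OF ct sub])
  moreover have "sets \<pi> = sets (restrict_space borel S)" using pop unfolding population_def by blast
  ultimately have meas: "f \<in> borel_measurable \<pi>"
    using measurable_cong_sets[of \<pi> "restrict_space borel S" borel borel] by simp
  have "compact (f ` prob_simplex)" by (rule compact_continuous_image[OF ct compact_simplex])
  then obtain B where B: "\<And>x. x \<in> f ` prob_simplex \<Longrightarrow> norm x \<le> B"
    using compact_imp_bounded bounded_iff by metis
  have "AE x in \<pi>. norm (f x) \<le> B"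
    using B sub pop_space[OF pop] by (intro AE_I2) auto
  then show ?thesis using meas by (rule integrable_const_bound)
qed

lemma pop_integral_add_const:
  assumes pop: "population S \<pi>" and int: "integrable \<pi> (f :: _ \<Rightarrow> real)"
  shows "(\<integral>x. f x + k \<partial>\<pi>) = (\<integral>x. f x \<partial>\<pi>) + k"
proof -
  interpret prob_space \<pi> using pop unfolding population_def by blast
  show ?thesis using int by (simp add: prob_space)
qed

lemma convex_simplex: "convex (prob_simplex :: (real^'n::finite) set)"
  unfolding convex_def prob_simplex_def
  by (auto simp: sum.distrib sum_distrib_left[symmetric])

lemma vA_max0_convex_cont:
  assumes "finite A" "A \<noteq> {}"
  shows "convex_on prob_simplex (\<lambda>s. max (vA A s) 0)"
    and "continuous_on prob_simplex (\<lambda>s. max (vA A s) 0)"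
proof -
  have c: "convex_on UNIV (\<lambda>s. max (vA A s) 0)"
    by (rule convex_on_max0[OF vA_convex[OF assms]])
  then show "convex_on prob_simplex (\<lambda>s. max (vA A s) 0)"
    by (rule convex_on_subset) (simp_all add: convex_simplex)
  show "continuous_on prob_simplex (\<lambda>s. max (vA A s) 0)"
    using convex_on_continuous[OF open_UNIV c] by (rule continuous_on_subset) simp
qed

lemma vA_scale:
  assumes "finite A" "A \<noteq> {}" "t \<ge> 0"
  shows "vA ((\<lambda>a. t *\<^sub>R a) ` A) s = t * vA A s"
proof -
  have "vA ((\<lambda>a. t *\<^sub>R a) ` A) s = Max ((\<lambda>x. t * x) ` ((\<lambda>a. inner a s) ` A))"
    unfolding vA_inner image_image by simp
  also have "\<dots> = t * Max ((\<lambda>a. inner a s) ` A)"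
    using assms by (intro mono_Max_commute[symmetric]) (auto simp: mono_def mult_left_mono)
  finally show ?thesis unfolding vA_inner .
qed

lemma disc_iff:
  "systematic_disc c \<pi> \<pi>' \<or> no_disc c \<pi> \<pi>' \<longleftrightarrow>
   (\<forall>A \<alpha>. firm A \<alpha> \<longrightarrow> excludes c A \<alpha> \<pi>' \<longrightarrow> excludes c A \<alpha> \<pi>)"
  unfolding systematic_disc_def no_disc_def unsystematic_disc_def by blast

lemma P_imp_le:
  assumes P: "\<forall>A \<alpha>. firm A \<alpha> \<longrightarrow> excludes c A \<alpha> \<pi>' \<longrightarrow> excludes c A \<alpha> \<pi>"
    and c: "c > 0" and A: "finite A" "A \<noteq> {}"
  shows "(\<integral>s. max (vA A s) 0 \<partial>\<pi>) \<le> (\<integral>s. max (vA A s) 0 \<partial>\<pi>')"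
proof (rule ccontr)
  define G where "G = (\<integral>s. max (vA A s) 0 \<partial>\<pi>)"
  define G' where "G' = (\<integral>s. max (vA A s) 0 \<partial>\<pi>')"
  assume "\<not> ?thesis"
  then have lt: "G' < G" unfolding G_def G'_def by simp
  have "G' \<ge> 0" unfolding G'_def by (intro integral_nonneg_AE AE_I2) simp
  define t where "t = 2 * c / (G + G')"
  have t: "t > 0" using lt \<open>G' \<ge> 0\<close> c unfolding t_def by simp
  have g: "(\<integral>s. max (vA ((\<lambda>a. t *\<^sub>R a) ` A) s) 0 \<partial>M) = t * (\<integral>s. max (vA A s) 0 \<partial>M)" for M
  proof -
    have "(\<lambda>s. max (vA ((\<lambda>a. t *\<^sub>R a) ` A) s) 0) = (\<lambda>s. t * max (vA A s) 0)"
      using t by (simp add: vA_scale[OF A] max_mult_distrib_left)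
    then show ?thesis by simp
  qed
  have firm: "firm ((\<lambda>a. t *\<^sub>R a) ` A) 1" using A unfolding firm_def by auto
  have "t * G' \<le> c"
  proof -
    have "2 * c * G' \<le> c * (G + G')" using lt c by (simp add: algebra_simps)
    then show ?thesis using lt \<open>G' \<ge> 0\<close> unfolding t_def by (simp add: divide_simps)
  qed
  then have "excludes c ((\<lambda>a. t *\<^sub>R a) ` A) 1 \<pi>'" unfolding excludes_def g G'_def by simp
  then have "excludes c ((\<lambda>a. t *\<^sub>R a) ` A) 1 \<pi>" using P firm by blast
  then have "t * G \<le> c" unfolding excludes_def g G_def by simp
  moreover have "c < t * G"
  proof -
    have "c * (G + G') < 2 * c * G" using lt c by (simp add: algebra_simps)
    then show ?thesis using lt \<open>G' \<ge> 0\<close> unfolding t_def by (simp add: divide_simps)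
  qed
  ultimately show False by simp
qed



theorem lemma1:
  fixes S :: "(real^'n::finite) set" and c :: real
    and \<pi> \<pi>' :: "(real^'n) measure"
  assumes "S \<in> sets borel" and "S \<subseteq> prob_simplex" and "c > 0"
    and "population S \<pi>" and "population S \<pi>'"
    and "skill_dist \<pi> = skill_dist \<pi>'"
  shows "M_order \<pi>' \<pi> \<longleftrightarrow> systematic_disc c \<pi> \<pi>' \<or> no_disc c \<pi> \<pi>'"
  unfolding disc_iff
proof
  assume M: "M_order \<pi>' \<pi>"
  show "\<forall>A \<alpha>. firm A \<alpha> \<longrightarrow> excludes c A \<alpha> \<pi>' \<longrightarrow> excludes c A \<alpha> \<pi>"
  proof (intro allI impI)
    fix A \<alpha> assume f: "firm A \<alpha>" and ex: "excludes c A \<alpha> \<pi>'"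
    then have A: "finite A" "A \<noteq> {}" and al: "\<alpha> > 0" unfolding firm_def by auto
    have "(\<integral>s. max (vA A s) 0 \<partial>\<pi>) \<le> (\<integral>s. max (vA A s) 0 \<partial>\<pi>')"
      using M vA_max0_convex_cont[OF A] unfolding M_order_def by blast
    then have "\<alpha> * (\<integral>s. max (vA A s) 0 \<partial>\<pi>) \<le> \<alpha> * (\<integral>s. max (vA A s) 0 \<partial>\<pi>')"
      using al by (intro mult_left_mono) auto
    then show "excludes c A \<alpha> \<pi>" using ex unfolding excludes_def by linarith
  qed
next
  assume P: "\<forall>A \<alpha>. firm A \<alpha> \<longrightarrow> excludes c A \<alpha> \<pi>' \<longrightarrow> excludes c A \<alpha> \<pi>"
  show "M_order \<pi>' \<pi>" unfolding M_order_def
  proof (intro allI impI, elim conjE)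
    fix h :: "real^'n \<Rightarrow> real"
    assume cv: "convex_on prob_simplex h" and ct: "continuous_on prob_simplex h"
    have "compact (h ` prob_simplex)" by (rule compact_continuous_image[OF ct compact_simplex])
    then obtain B where B: "\<And>x. x \<in> h ` prob_simplex \<Longrightarrow> norm x \<le> B"
      using compact_imp_bounded bounded_iff by metis
    define h' where "h' = (\<lambda>s. h s + (B + 1))"
    have cv': "convex_on prob_simplex h'" unfolding h'_def
      by (intro convex_on_add cv) (simp_all add: convex_on_const convex_simplex)
    have ct': "continuous_on prob_simplex h'" unfolding h'_def
      by (intro continuous_on_add ct continuous_on_const)
    have h'1: "h' s \<ge> 1" if "s \<in> prob_simplex" for s
      using B[of "h s"] that unfolding h'_def by auto
    have key: "(\<integral>s. h' s \<partial>\<pi>) \<le> (\<integral>s. h' s \<partial>\<pi>') + e" if e: "0 < e" "e < 1" for e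
    proof -
      obtain A where A: "finite A" "A \<noteq> {}"
        and app: "\<And>s. s \<in> prob_simplex \<Longrightarrow> vA A s \<le> h' s \<and> h' s - e < vA A s"
        using approx_vA[OF cv' ct' e(1)] by blast
      note vc = vA_max0_convex_cont(2)[OF A]
      have "(\<integral>s. h' s \<partial>\<pi>) \<le> (\<integral>s. max (vA A s) 0 + e \<partial>\<pi>)"
      proof (rule integral_mono)
        show "integrable \<pi> h'" by (rule pop_integrable[OF assms(4,2) ct'])
        show "integrable \<pi> (\<lambda>s. max (vA A s) 0 + e)"
          by (rule pop_integrable[OF assms(4,2)]) (intro continuous_on_add vc continuous_on_const)
        fix s assume "s \<in> space \<pi>"
        then have "s \<in> prob_simplex" using pop_space[OF assms(4)] assms(2) by blast
        then show "h' s \<le> max (vA A s) 0 + e" using app by force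
      qed
      also have "\<dots> = (\<integral>s. max (vA A s) 0 \<partial>\<pi>) + e"
        by (rule pop_integral_add_const[OF assms(4) pop_integrable[OF assms(4,2) vc]])
      also have "\<dots> \<le> (\<integral>s. max (vA A s) 0 \<partial>\<pi>') + e"
        using P_imp_le[OF P assms(3) A] by simp
      also have "(\<integral>s. max (vA A s) 0 \<partial>\<pi>') \<le> (\<integral>s. h' s \<partial>\<pi>')"
      proof (rule integral_mono)
        show "integrable \<pi>' h'" by (rule pop_integrable[OF assms(5,2) ct'])
        show "integrable \<pi>' (\<lambda>s. max (vA A s) 0)" by (rule pop_integrable[OF assms(5,2) vc])
        fix s assume "s \<in> space \<pi>'"
        then have "s \<in> prob_simplex" using pop_space[OF assms(5)] assms(2) by blast
        then show "max (vA A s) 0 \<le> h' s" using app h'1 by force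
      qed
      finally show ?thesis by simp
    qed
    have "(\<integral>s. h' s \<partial>\<pi>) \<le> (\<integral>s. h' s \<partial>\<pi>')"
    proof (rule ccontr)
      assume "\<not> ?thesis"
      then have d: "(\<integral>s. h' s \<partial>\<pi>') < (\<integral>s. h' s \<partial>\<pi>)" by simp
      define e where "e = min (1/2) (((\<integral>s. h' s \<partial>\<pi>) - (\<integral>s. h' s \<partial>\<pi>')) / 2)"
      have "0 < e" "e < 1" using d unfolding e_def by auto
      have "e \<le> ((\<integral>s. h' s \<partial>\<pi>) - (\<integral>s. h' s \<partial>\<pi>')) / 2" unfolding e_def by (rule min.cobounded2)
      moreover have "(\<integral>s. h' s \<partial>\<pi>) - (\<integral>s. h' s \<partial>\<pi>') \<le> e"
        using key[OF \<open>0 < e\<close> \<open>e < 1\<close>] by simp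
      ultimately have "(\<integral>s. h' s \<partial>\<pi>) - (\<integral>s. h' s \<partial>\<pi>') \<le> ((\<integral>s. h' s \<partial>\<pi>) - (\<integral>s. h' s \<partial>\<pi>')) / 2"
        by (rule order.trans[rotated])
      then show False using d by simp
    qed
    moreover have "(\<integral>s. h' s \<partial>M) = (\<integral>s. h s \<partial>M) + (B + 1)" if "population S M" for M
      unfolding h'_def
      by (rule pop_integral_add_const[OF that pop_integrable[OF that assms(2) ct]])
    ultimately show "(\<integral>s. h s \<partial>\<pi>) \<le> (\<integral>s. h s \<partial>\<pi>')" using assms(4,5) by fastforce
  qed
qed

end
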